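(* The topological entropy of any self-induced minimal Cantor system is either $0$ or $+\infty$.
   Context: A minimal Cantor system $(X,T)$ ($X$ a Cantor set, $T$ a homeomorphism with all orbits dense) is self-induced if there is a nonempty clopen proper subset $U\subsetneq X$ such that the induced system $(U,T_U)$, $T_U(x)=T^{r_U(x)}x$ with $r_U(x)=\inf\{n>0:T^nx\in U\}$, is topologically conjugate to $(X,T)$. *)

theory Defs
  imports "HOL-Analysis.Analysis"
begin

definition cantor_set :: "'a::metric_space set \<Rightarrow> bool" where
  "cantor_set X \<longleftrightarrow> X \<noteq> {} \<and> compact X \<and> (\<forall>x\<in>X. x islimpt X) \<and>
     (\<forall>x\<in>X. connected_component_set X x = {x})"

definition orbit :: "'a set \<Rightarrow> ('a \<Rightarrow> 'a) \<Rightarrow> 'a \<Rightarrow> 'a set" where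
  "orbit X T x = {(T ^^ n) x | n. True} \<union> {(inv_into X T ^^ n) x | n. True}"

definition minimal_cantor_system :: "'a::metric_space set \<Rightarrow> ('a \<Rightarrow> 'a) \<Rightarrow> bool" where
  "minimal_cantor_system X T \<longleftrightarrow> cantor_set X \<and> (\<exists>S. homeomorphism X X T S) \<and>
     (\<forall>x\<in>X. closure (orbit X T x) = X)"

definition return_time :: "'a set \<Rightarrow> ('a \<Rightarrow> 'a) \<Rightarrow> 'a \<Rightarrow> nat" where
  "return_time U T x = (LEAST n. n > 0 \<and> (T ^^ n) x \<in> U)"

definition induced_map :: "'a set \<Rightarrow> ('a \<Rightarrow> 'a) \<Rightarrow> 'a \<Rightarrow> 'a" where
  "induced_map U T x = (T ^^ return_time U T x) x"

definition top_conjugate :: "'a::topological_space set \<Rightarrow> ('a \<Rightarrow> 'a) \<Rightarrow> 'b::topological_space set \<Rightarrow> ('b \<Rightarrow> 'b) \<Rightarrow> bool" where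
  "top_conjugate X T Y S \<longleftrightarrow> (\<exists>h g. homeomorphism X Y h g \<and> (\<forall>x\<in>X. h (T x) = S (h x)))"

definition self_induced :: "'a::metric_space set \<Rightarrow> ('a \<Rightarrow> 'a) \<Rightarrow> bool" where
  "self_induced X T \<longleftrightarrow> (\<exists>U. U \<noteq> {} \<and> U \<subset> X \<and>
     openin (top_of_set X) U \<and> closedin (top_of_set X) U \<and>
     top_conjugate U (induced_map U T) X T)"

definition separated_set :: "'a::metric_space set \<Rightarrow> ('a \<Rightarrow> 'a) \<Rightarrow> nat \<Rightarrow> real \<Rightarrow> 'a set \<Rightarrow> bool" where
  "separated_set X T n \<epsilon> E \<longleftrightarrow> E \<subseteq> X \<and>
     (\<forall>x\<in>E. \<forall>y\<in>E. x \<noteq> y \<longrightarrow> (\<exists>k<n. dist ((T ^^ k) x) ((T ^^ k) y) > \<epsilon>))"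

definition top_entropy :: "'a::metric_space set \<Rightarrow> ('a \<Rightarrow> 'a) \<Rightarrow> ereal" where
  "top_entropy X T =
     (SUP \<epsilon> \<in> {0<..}. limsup (\<lambda>n. (SUP E \<in> {E. finite E \<and> E \<noteq> {} \<and> separated_set X T n \<epsilon> E}.
                                    ereal (ln (real (card E)) / real n))))"

end

theory Submission
  imports Defs
begin

lemma iter_cont:
  assumes "continuous_on X \<phi>" "\<phi> ` X \<subseteq> X"
  shows "continuous_on X (\<phi>^^i) \<and> (\<phi>^^i) ` X \<subseteq> X"
proof (induction i)
  case 0 then show ?case by (simp add: continuous_on_id)
next
  case (Suc i)
  then show ?case using assms
    using continuous_on_compose2[of X \<phi> X "\<phi>^^i"] by (auto simp: o_def)
qed

lemma iter_in: "\<phi> ` X \<subseteq> X \<Longrightarrow> x \<in> X \<Longrightarrow> (\<phi>^^i) x \<in> X"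
  by (induction i) auto

lemma unif_iter:
  assumes "compact X" "continuous_on X \<phi>" "\<phi> ` X \<subseteq> X" "e > 0"
  shows "\<exists>d>0. \<forall>i\<le>N. \<forall>a\<in>X. \<forall>b\<in>X. dist a b \<le> d \<longrightarrow> dist ((\<phi>^^i) a) ((\<phi>^^i) b) \<le> e"
proof -
  have each: "\<exists>d>0. \<forall>a\<in>X. \<forall>b\<in>X. dist a b < d \<longrightarrow> dist ((\<phi>^^i) a) ((\<phi>^^i) b) < e" for i
  proof -
    have "uniformly_continuous_on X (\<phi>^^i)"
      using iter_cont[OF assms(2,3)] compact_uniformly_continuous assms(1) by blast
    then show ?thesis using assms(4) unfolding uniformly_continuous_on_def
      by (metis dist_commute)
  qed
  have "\<exists>d>0. \<forall>i\<le>N. \<forall>a\<in>X. \<forall>b\<in>X. dist a b < d \<longrightarrow> dist ((\<phi>^^i) a) ((\<phi>^^i) b) < e"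
  proof (induction N)
    case 0 then show ?case using each[of 0] by auto
  next
    case (Suc N)
    then obtain d1 where d1: "d1 > 0" "\<forall>i\<le>N. \<forall>a\<in>X. \<forall>b\<in>X. dist a b < d1 \<longrightarrow> dist ((\<phi>^^i) a) ((\<phi>^^i) b) < e" by blast
    obtain d2 where d2: "d2 > 0" "\<forall>a\<in>X. \<forall>b\<in>X. dist a b < d2 \<longrightarrow> dist ((\<phi>^^Suc N) a) ((\<phi>^^Suc N) b) < e"
      using each by blast
    show ?case
      apply (rule exI[of _ "min d1 d2"])
      using d1 d2 by (auto simp: le_Suc_eq)
  qed
  then obtain d where "d > 0" "\<forall>i\<le>N. \<forall>a\<in>X. \<forall>b\<in>X. dist a b < d \<longrightarrow> dist ((\<phi>^^i) a) ((\<phi>^^i) b) < e" by blast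
  then show ?thesis
    by (intro exI[of _ "d/2"]) force
qed

locale sys =
  fixes X :: "'a::metric_space set" and T S :: "'a \<Rightarrow> 'a"
  assumes cX: "compact X" and hom: "homeomorphism X X T S"
begin

lemma T_in: "x \<in> X \<Longrightarrow> T x \<in> X" using hom unfolding homeomorphism_def by blast
lemma S_in: "x \<in> X \<Longrightarrow> S x \<in> X" using hom unfolding homeomorphism_def by blast
lemma ST: "x \<in> X \<Longrightarrow> S (T x) = x" using hom unfolding homeomorphism_def by blast
lemma TS: "x \<in> X \<Longrightarrow> T (S x) = x" using hom unfolding homeomorphism_def by blast
lemma contT: "continuous_on X T" using hom unfolding homeomorphism_def by blast
lemma contS: "continuous_on X S" using hom unfolding homeomorphism_def by blast
lemma TX: "T ` X \<subseteq> X" using T_in by blast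
lemma SX: "S ` X \<subseteq> X" using S_in by blast
lemma Tn_in: "x \<in> X \<Longrightarrow> (T^^n) x \<in> X" using iter_in[OF TX] .
lemma Sn_in: "x \<in> X \<Longrightarrow> (S^^n) x \<in> X" using iter_in[OF SX] .

lemma SnTn: "x \<in> X \<Longrightarrow> (S^^n) ((T^^n) x) = x"
proof (induction n)
  case (Suc n)
  have "(S^^Suc n) ((T^^Suc n) x) = (S^^n) (S (T ((T^^n) x)))"
    by (simp only: funpow_Suc_right[of n S] funpow.simps(2)[of n T] o_apply)
  also have "\<dots> = x" using Suc Tn_in ST by simp
  finally show ?case .
qed simp

lemma Tn_inj: "inj_on (T^^n) X"
  by (metis SnTn inj_onI)

lemma T_back: "k \<le> e \<Longrightarrow> x \<in> X \<Longrightarrow> (T^^k) x = (S^^(e-k)) ((T^^e) x)"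
proof -
  assume "k \<le> e" "x \<in> X"
  then have "(T^^e) x = (T^^(e-k)) ((T^^k) x)" by (metis funpow_add le_add_diff_inverse2 o_apply)
  then show ?thesis using SnTn Tn_in \<open>x\<in>X\<close> by simp
qed

lemma inv_eq: "y \<in> X \<Longrightarrow> inv_into X T y = S y"
  by (metis ST TS S_in inj_onI inv_into_f_eq)

lemma invn_eq: "x \<in> X \<Longrightarrow> (inv_into X T ^^ n) x = (S^^n) x"
  by (induction n) (auto simp: inv_eq Sn_in)

lemma hit:
  assumes dense: "\<forall>x\<in>X. closure (orbit X T x) = X"
    and V: "openin (top_of_set X) V" "V \<noteq> {}"
  shows "\<exists>K. \<forall>x\<in>X. \<exists>j\<le>K. (T^^j) x \<in> V"
proof -
  obtain W where W: "open W" "V = W \<inter> X" using V(1) by (auto simp: openin_open)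
  obtain p where p: "p \<in> V" using V(2) by blast
  have meet: "\<exists>n. (T^^n) x \<in> V \<or> (S^^n) x \<in> V" if x: "x \<in> X" for x
  proof -
    have "p \<in> closure (orbit X T x)" using dense x p W by auto
    then have "W \<inter> orbit X T x \<noteq> {}" using W p open_Int_closure_eq_empty[of W "orbit X T x"] by blast
    then obtain y where y: "y \<in> W" "y \<in> orbit X T x" by blast
    then show ?thesis using W x Tn_in Sn_in invn_eq unfolding orbit_def by auto
  qed
  define G where "G = (\<lambda>(b::bool,n::nat). SOME A. open A \<and> A \<inter> X = (if b then T^^n else S^^n) -` W \<inter> X)"
  have G: "open (G (b,n)) \<and> G (b,n) \<inter> X = (if b then T^^n else S^^n) -` W \<inter> X" for b n
  proof -
    have "continuous_on X (if b then T^^n else S^^n)"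
      using iter_cont[OF contT TX] iter_cont[OF contS SX] by auto
    then have "\<exists>A. open A \<and> A \<inter> X = (if b then T^^n else S^^n) -` W \<inter> X"
      using W(1) continuous_on_open_invariant by blast
    then show ?thesis unfolding G_def prod.case by (rule someI_ex)
  qed
  have cov: "X \<subseteq> (\<Union>c\<in>UNIV. G c)"
  proof
    fix x assume x: "x \<in> X"
    then obtain n where "(T^^n) x \<in> V \<or> (S^^n) x \<in> V" using meet by blast
    then have "x \<in> G (True,n) \<or> x \<in> G (False,n)" using G[of True n] G[of False n] x W by auto
    then show "x \<in> (\<Union>c\<in>UNIV. G c)" by blast
  qed
  obtain C' where C': "finite C'" "X \<subseteq> (\<Union>c\<in>C'. G c)"
    using compactE_image[OF cX, of UNIV G] G cov by auto
  define K where "K = Max (insert 0 (snd ` C'))"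
  have K: "\<forall>y\<in>X. \<exists>n\<le>K. (T^^n) y \<in> V \<or> (S^^n) y \<in> V"
  proof
    fix y assume y: "y \<in> X"
    then obtain b n where bn: "(b,n) \<in> C'" "y \<in> G (b,n)" using C' by auto
    have "n \<in> snd ` C'" using bn(1) by force
    then have "n \<le> K" unfolding K_def using C' by (intro Max_ge) auto
    moreover have "(T^^n) y \<in> V \<or> (S^^n) y \<in> V" using G[of b n] bn y W Tn_in[OF y] Sn_in[OF y] by (cases b) auto
    ultimately show "\<exists>n\<le>K. (T^^n) y \<in> V \<or> (S^^n) y \<in> V" by blast
  qed
  show ?thesis
  proof (rule exI[of _ "2*K"], intro ballI)
    fix x assume x: "x \<in> X"
    then obtain n where n: "n \<le> K" "(T^^n) ((T^^K) x) \<in> V \<or> (S^^n) ((T^^K) x) \<in> V"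
      using K Tn_in by blast
    show "\<exists>j\<le>2*K. (T^^j) x \<in> V"
    proof (cases "(T^^n) ((T^^K) x) \<in> V")
      case True then show ?thesis using n by (intro exI[of _ "n+K"]) (simp add: funpow_add)
    next
      case False
      then have "(S^^(K-(K-n))) ((T^^K) x) \<in> V" using n by simp
      then have "(T^^(K-n)) x \<in> V" using T_back[of "K-n" K x] x by simp
      then show ?thesis by (intro exI[of _ "K-n"]) simp
    qed
  qed
qed

end

lemma conj_iter:
  assumes "\<forall>x\<in>U. h (f x) = T (h x)" "f ` U \<subseteq> U" "x \<in> U"
  shows "h ((f^^k) x) = (T^^k) (h x) \<and> (f^^k) x \<in> U"
  using assms by (induction k) auto

lemma entropy_conj_le:
  assumes hom: "homeomorphism U X h g" and cX: "compact X"
    and comm: "\<forall>x\<in>U. h (f x) = T (h x)" and fU: "f ` U \<subseteq> U"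
  shows "top_entropy U f \<le> top_entropy X T"
  unfolding top_entropy_def
proof (rule SUP_least)
  fix \<epsilon> :: real assume "\<epsilon> \<in> {0<..}"
  then have e: "\<epsilon> > 0" by simp
  have "uniformly_continuous_on X g"
    using hom cX compact_uniformly_continuous unfolding homeomorphism_def by blast
  then obtain d0 where d0: "d0 > 0" "\<forall>p\<in>X. \<forall>q\<in>X. dist p q < d0 \<longrightarrow> dist (g p) (g q) < \<epsilon>"
    using e unfolding uniformly_continuous_on_def by (metis dist_commute)
  define \<delta> where "\<delta> = d0/2"
  have dpos: "\<delta> > 0" using d0 by (simp add: \<delta>_def)
  have hX: "\<And>x. x \<in> U \<Longrightarrow> h x \<in> X" "\<And>x. x \<in> U \<Longrightarrow> g (h x) = x"
    using hom unfolding homeomorphism_def by auto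
  have key: "\<And>a b. a \<in> U \<Longrightarrow> b \<in> U \<Longrightarrow> dist a b > \<epsilon> \<Longrightarrow> dist (h a) (h b) > \<delta>"
  proof (rule ccontr)
    fix a b assume ab: "a \<in> U" "b \<in> U" "dist a b > \<epsilon>" "\<not> dist (h a) (h b) > \<delta>"
    then have "dist (h a) (h b) < d0" using d0 by (simp add: \<delta>_def)
    then have "dist (g (h a)) (g (h b)) < \<epsilon>" using d0 hX ab by blast
    then show False using ab hX by simp
  qed
  have inj: "inj_on h U" using hX by (metis inj_onI)
  have pw: "(SUP E \<in> {E. finite E \<and> E \<noteq> {} \<and> separated_set U f n \<epsilon> E}. ereal (ln (real (card E)) / real n))
      \<le> (SUP E \<in> {E. finite E \<and> E \<noteq> {} \<and> separated_set X T n \<delta> E}. ereal (ln (real (card E)) / real n))" for n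
  proof (rule SUP_least)
    fix F assume F: "F \<in> {E. finite E \<and> E \<noteq> {} \<and> separated_set U f n \<epsilon> E}"
    have FU: "F \<subseteq> U" using F unfolding separated_set_def by auto
    have card: "card (h ` F) = card F" using inj FU by (meson card_image inj_on_subset)
    have "separated_set X T n \<delta> (h ` F)"
      unfolding separated_set_def
    proof (intro conjI ballI impI)
      show "h ` F \<subseteq> X" using FU hX by auto
      fix x' y' assume "x' \<in> h ` F" "y' \<in> h ` F" "x' \<noteq> y'"
      then obtain x y where xy: "x \<in> F" "y \<in> F" "x' = h x" "y' = h y" "x \<noteq> y" by auto
      then obtain k where k: "k < n" "dist ((f^^k) x) ((f^^k) y) > \<epsilon>"
        using F xy(1,2,5) unfolding separated_set_def by blast
      have "dist (h ((f^^k) x)) (h ((f^^k) y)) > \<delta>"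
        using key k conj_iter[OF comm fU] xy FU by blast
      then show "\<exists>k<n. dist ((T^^k) x') ((T^^k) y') > \<delta>"
      proof -
        have "h ((f^^k) x) = (T^^k) x'" "h ((f^^k) y) = (T^^k) y'"
          using conj_iter[OF comm fU] xy FU by auto
        then show ?thesis using k \<open>dist (h ((f^^k) x)) (h ((f^^k) y)) > \<delta>\<close> by auto
      qed
    qed
    then have hF: "h ` F \<in> {E. finite E \<and> E \<noteq> {} \<and> separated_set X T n \<delta> E}" using F by auto
    then show "ereal (ln (real (card F)) / real n)
       \<le> (SUP E \<in> {E. finite E \<and> E \<noteq> {} \<and> separated_set X T n \<delta> E}. ereal (ln (real (card E)) / real n))"
      using SUP_upper[OF hF, where f="\<lambda>E. ereal (ln (real (card E)) / real n)"] card by simp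
  qed
  have "limsup (\<lambda>n. SUP E \<in> {E. finite E \<and> E \<noteq> {} \<and> separated_set U f n \<epsilon> E}. ereal (ln (real (card E)) / real n))
     \<le> limsup (\<lambda>n. SUP E \<in> {E. finite E \<and> E \<noteq> {} \<and> separated_set X T n \<delta> E}. ereal (ln (real (card E)) / real n))"
    by (rule Limsup_mono) (use pw in auto)
  also have "\<dots> \<le> (SUP \<epsilon> \<in> {0<..}. limsup (\<lambda>n. SUP E \<in> {E. finite E \<and> E \<noteq> {} \<and> separated_set X T n \<epsilon> E}. ereal (ln (real (card E)) / real n)))"
    using dpos by (intro SUP_upper) simp
  finally show "limsup (\<lambda>n. SUP E \<in> {E. finite E \<and> E \<noteq> {} \<and> separated_set U f n \<epsilon> E}. ereal (ln (real (card E)) / real n))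
     \<le> (SUP \<epsilon> \<in> {0<..}. limsup (\<lambda>n. SUP E \<in> {E. finite E \<and> E \<noteq> {} \<and> separated_set X T n \<epsilon> E}. ereal (ln (real (card E)) / real n)))" .
qed

locale ind = sys +
  fixes U :: "'a::metric_space set" and N M :: nat and d0 :: real
  assumes UX: "U \<subseteq> X"
    and ret: "\<forall>x\<in>X. \<exists>j. 1 \<le> j \<and> j \<le> N \<and> (T^^j) x \<in> U"
    and Mpos: "M \<ge> 1" and win: "\<forall>x\<in>X. \<exists>j\<le>M. (T^^j) x \<notin> U"
    and d0: "d0 > 0" "\<forall>x\<in>X. \<forall>y\<in>X. dist x y < d0 \<longrightarrow> (x \<in> U \<longleftrightarrow> y \<in> U)"
begin

abbreviation "r \<equiv> return_time U T"
abbreviation "f \<equiv> induced_map U T"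
definition Sj :: "nat \<Rightarrow> 'a \<Rightarrow> nat" where "Sj j x = (\<Sum>i<j. r ((f^^i) x))"

lemma r_props: "x \<in> X \<Longrightarrow> 1 \<le> r x \<and> r x \<le> N \<and> (T^^r x) x \<in> U"
proof -
  assume x: "x \<in> X"
  then obtain j where j: "1 \<le> j" "j \<le> N" "(T^^j) x \<in> U" using ret by blast
  then have ex: "\<exists>n. n > 0 \<and> (T^^n) x \<in> U" by (intro exI[of _ j]) simp
  have "r x > 0 \<and> (T^^r x) x \<in> U" unfolding return_time_def by (rule LeastI_ex[OF ex])
  moreover have "r x \<le> j" unfolding return_time_def using j by (intro Least_le) simp
  ultimately show ?thesis using j by simp
qed

lemma r_least: "0 < i \<Longrightarrow> (T^^i) x \<in> U \<Longrightarrow> r x \<le> i"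
  unfolding return_time_def by (intro Least_le) simp

lemma f_in: "x \<in> X \<Longrightarrow> f x \<in> U"
  using r_props unfolding induced_map_def by blast

lemma Sj_Suc: "Sj (Suc j) x = Sj j x + r ((f^^j) x)" by (simp add: Sj_def)

lemma f_iter: "x \<in> U \<Longrightarrow> (f^^j) x = (T^^(Sj j x)) x \<and> (f^^j) x \<in> U"
proof (induction j)
  case 0 then show ?case by (simp add: Sj_def)
next
  case (Suc j)
  define y where "y = (f^^j) x"
  have y: "y = (T^^(Sj j x)) x" "y \<in> U" using Suc y_def by auto
  have "(f^^Suc j) x = f y" by (simp add: y_def)
  also have "\<dots> = (T^^r y) y" by (simp only: induced_map_def)
  also have "\<dots> = (T^^(r y + Sj j x)) x" using y(1) by (simp add: funpow_add)
  also have "\<dots> = (T^^(Sj (Suc j) x)) x" by (simp only: Sj_Suc y_def add.commute)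
  finally show ?case using f_in[of y] y UX by (auto simp: y_def)
qed

lemma f_iterU: "x \<in> U \<Longrightarrow> (T^^(Sj j x)) x \<in> U"
  by (metis f_iter)

lemma f_iterX: "x \<in> U \<Longrightarrow> (f^^j) x \<in> X"
  by (metis f_iter UX subsetD)

lemma Sj_add: "x \<in> U \<Longrightarrow> Sj (a + b) x \<ge> Sj a x + b"
proof (induction b)
  case (Suc b)
  have "(f^^(a+b)) x \<in> X" using f_iter Suc UX by blast
  then show ?case using Suc r_props[of "(f^^(a+b)) x"] by (simp add: Sj_Suc)
qed simp

lemma Sj_window: assumes x: "x \<in> U" shows "Sj (j + M) x \<ge> Sj j x + M + 1"
proof -
  have P: "Sj (j+i) x \<ge> Sj j x + i \<and> (Sj (j+i) x = Sj j x + i \<longrightarrow> (\<forall>t\<le>i. (T^^(Sj j x + t)) x \<in> U))" for i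
  proof (induction i)
    case 0 then show ?case using f_iterU[OF x, of j] by simp
  next
    case (Suc i)
    have fX: "(f^^(j+i)) x \<in> X" using f_iter x UX by blast
    have S1: "Sj (j + Suc i) x = Sj (j+i) x + r ((f^^(j+i)) x)" by (simp add: Sj_Suc)
    have r1: "r ((f^^(j+i)) x) \<ge> 1" using r_props[OF fX] by simp
    show ?case
    proof
      show "Sj (j + Suc i) x \<ge> Sj j x + Suc i" using S1 r1 Suc by simp
      show "Sj (j + Suc i) x = Sj j x + Suc i \<longrightarrow> (\<forall>t\<le>Suc i. (T^^(Sj j x + t)) x \<in> U)"
      proof
        assume eq: "Sj (j + Suc i) x = Sj j x + Suc i"
        then have e2: "Sj (j+i) x = Sj j x + i" using S1 r1 Suc by linarith
        have "(T^^(Sj j x + Suc i)) x \<in> U" using f_iterU[OF x, of "j + Suc i"] eq by simp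
        then show "\<forall>t\<le>Suc i. (T^^(Sj j x + t)) x \<in> U" using Suc e2 by (auto simp: le_Suc_eq)
      qed
    qed
  qed
  show ?thesis
  proof (rule ccontr)
    assume "\<not> ?thesis"
    then have eq: "Sj (j+M) x = Sj j x + M" using P[of M] by simp
    have y: "(T^^(Sj j x)) x \<in> X" using f_iterU[OF x, of j] UX by auto
    then obtain t where t: "t \<le> M" "(T^^t) ((T^^(Sj j x)) x) \<notin> U" using win by blast
    have "(T^^(Sj j x + t)) x \<in> U" using P[of M] eq t by simp
    moreover have "(T^^(Sj j x + t)) x = (T^^t) ((T^^(Sj j x)) x)"
      by (simp only: add.commute[of "Sj j x" t] funpow_add o_apply)
    ultimately show False using t by simp
  qed
qed

lemma Sj_lower: assumes x: "x \<in> U" shows "Sj j x \<ge> j + j div M"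
proof -
  have q: "Sj (q*M) x \<ge> q*(M+1)" for q
  proof (induction q)
    case (Suc q)
    have "Sj (q*M + M) x \<ge> Sj (q*M) x + M + 1" using Sj_window[OF x] .
    then show ?case using Suc by (simp add: add.commute)
  qed simp
  have A: "Sj ((j div M)*M + j mod M) x \<ge> Sj ((j div M)*M) x + j mod M" using Sj_add[OF x] .
  have B: "Sj ((j div M)*M) x \<ge> (j div M)*M + j div M" using q[of "j div M"] by (simp add: algebra_simps)
  have C: "(j div M)*M + j mod M = j" by simp
  have A2: "Sj j x \<ge> Sj ((j div M)*M) x + j mod M" using A unfolding C .
  show ?thesis using A2 B C by linarith
qed

lemma Tcomp: "(T^^n) ((T^^s) y) = (T^^(s+n)) y"
  by (simp only: add.commute[of s n] funpow_add o_apply)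

lemma Sj_ge: "x \<in> U \<Longrightarrow> Sj j x \<ge> j"
  using Sj_add[of x 0 j] by (simp add: Sj_def)

lemma agree:
  assumes u: "u \<in> U" and v: "v \<in> U" and ag: "\<forall>i<k. ((T^^i) u \<in> U \<longleftrightarrow> (T^^i) v \<in> U)"
  shows "Sj j u < k \<Longrightarrow> Sj j u = Sj j v"
proof (induction j)
  case 0 show ?case by (simp add: Sj_def)
next
  case (Suc j)
  define a where "a = (f^^j) u"
  define b where "b = (f^^j) v"
  define s where "s = Sj j u"
  have aX: "a \<in> X" "b \<in> X" using f_iterX u v by (auto simp: a_def b_def)
  have ra: "1 \<le> r a" "(T^^r a) a \<in> U" and rb: "1 \<le> r b" "(T^^r b) b \<in> U" using r_props aX by auto
  have sum: "Sj (Suc j) u = s + r a" by (simp add: Sj_Suc s_def a_def)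
  then have lt: "s + r a < k" using Suc.prems by simp
  then have IH: "Sj j v = s" using Suc.IH ra by (simp add: s_def)
  have ab: "a = (T^^s) u" "b = (T^^s) v" using f_iter u v IH by (auto simp: a_def b_def s_def)
  have "(T^^(s + r a)) v \<in> U" using ag lt ra(2) ab Tcomp by metis
  then have "(T^^r a) b \<in> U" using ab Tcomp by metis
  then have le1: "r b \<le> r a" using r_least ra(1) by simp
  have "(T^^(s + r b)) u \<in> U" using ag lt le1 rb(2) ab Tcomp
    by (metis add_le_cancel_left order_le_less_trans)
  then have "(T^^r b) a \<in> U" using ab Tcomp by metis
  then have "r a \<le> r b" using r_least rb(1) by simp
  then show ?case using sum le1 IH by (simp add: Sj_Suc b_def)
qed

lemma choose_j:
  assumes u: "u \<in> U" and v: "v \<in> U" and ag: "\<forall>i<k. ((T^^i) u \<in> U \<longleftrightarrow> (T^^i) v \<in> U)"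
  shows "\<exists>j. Sj j u = Sj j v \<and> Sj j u \<le> k \<and> k \<le> Sj j u + N \<and> (j = 0 \<or> Sj j u < k)"
proof (cases "k = 0")
  case True then show ?thesis by (intro exI[of _ 0]) (simp add: Sj_def)
next
  case False
  define J where "J = {j. Sj j u < k}"
  have J0: "0 \<in> J" using False by (simp add: J_def Sj_def)
  have Jsub: "J \<subseteq> {..<k}" using Sj_ge[OF u] by (auto simp: J_def intro: le_less_trans)
  then have fin: "finite J" by (rule finite_subset) simp
  define jm where "jm = Max J"
  have jmJ: "jm \<in> J" using fin J0 by (auto simp: jm_def intro: Max_in)
  have "Suc jm \<notin> J"
  proof
    assume "Suc jm \<in> J"
    then have "Suc jm \<le> jm" unfolding jm_def using fin by (rule Max_ge[rotated])
    then show False by simp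
  qed
  then have ge: "Sj (Suc jm) u \<ge> k" by (simp add: J_def)
  have "(f^^jm) u \<in> X" using f_iter u UX by blast
  then have "Sj (Suc jm) u \<le> Sj jm u + N" using r_props by (simp add: Sj_Suc)
  moreover have "Sj jm u < k" using jmJ by (simp add: J_def)
  moreover have "Sj jm u = Sj jm v" using agree[OF u v ag] \<open>Sj jm u < k\<close> by blast
  ultimately show ?thesis using ge by (intro exI[of _ jm]) simp
qed

lemma sep_transfer:
  assumes FU: "F \<subseteq> U" and Fs: "separated_set X T m \<delta> F" and \<delta>d: "\<delta> < d0"
    and dd: "\<forall>i\<le>N. \<forall>a\<in>X. \<forall>b\<in>X. dist a b \<le> \<delta>' \<longrightarrow> dist ((T^^i) a) ((T^^i) b) \<le> \<delta>"
    and q: "q \<ge> 1" "m \<le> q*(M+1)"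
  shows "separated_set U f (q*M) \<delta>' F"
  unfolding separated_set_def
proof (intro conjI ballI impI)
  show "F \<subseteq> U" by (rule FU)
  fix u v assume uv: "u \<in> F" "v \<in> F" "u \<noteq> v"
  have u: "u \<in> U" and v: "v \<in> U" using uv FU by auto
  have ex: "\<exists>k. k < m \<and> dist ((T^^k) u) ((T^^k) v) > \<delta>" using Fs uv unfolding separated_set_def by blast
  define k0 where "k0 = (LEAST k. k < m \<and> dist ((T^^k) u) ((T^^k) v) > \<delta>)"
  have k0: "k0 < m" "dist ((T^^k0) u) ((T^^k0) v) > \<delta>"
    using LeastI_ex[OF ex] unfolding k0_def by auto
  have before: "\<not> dist ((T^^i) u) ((T^^i) v) > \<delta>" if "i < k0" for i
  proof
    assume "dist ((T^^i) u) ((T^^i) v) > \<delta>"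
    then have "k0 \<le> i" unfolding k0_def using that k0(1) by (intro Least_le) simp
    then show False using that by simp
  qed
  have ag: "\<forall>i<k0. ((T^^i) u \<in> U \<longleftrightarrow> (T^^i) v \<in> U)"
  proof (intro allI impI)
    fix i assume "i < k0"
    then have "dist ((T^^i) u) ((T^^i) v) < d0" using before \<delta>d by force
    moreover have "(T^^i) u \<in> X" "(T^^i) v \<in> X" using u v UX Tn_in by auto
    ultimately show "(T^^i) u \<in> U \<longleftrightarrow> (T^^i) v \<in> U" using d0(2) by blast
  qed
  obtain j where j: "Sj j u = Sj j v" "Sj j u \<le> k0" "k0 \<le> Sj j u + N" "j = 0 \<or> Sj j u < k0"
    using choose_j[OF u v ag] by blast
  define s where "s = Sj j u"
  have ab: "(f^^j) u = (T^^s) u" "(f^^j) v = (T^^s) v" using f_iter u v j(1) by (auto simp: s_def)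
  have abX: "(f^^j) u \<in> X" "(f^^j) v \<in> X" using f_iterX u v by auto
  have tk: "(T^^(k0 - s)) ((f^^j) u) = (T^^k0) u" "(T^^(k0 - s)) ((f^^j) v) = (T^^k0) v"
    using ab Tcomp j(2) by (auto simp: s_def)
  have "dist ((f^^j) u) ((f^^j) v) > \<delta>'"
  proof (rule ccontr)
    assume "\<not> ?thesis"
    then have "dist ((T^^(k0 - s)) ((f^^j) u)) ((T^^(k0 - s)) ((f^^j) v)) \<le> \<delta>"
      using dd abX j(3) by (simp add: s_def)
    then show False using tk k0(2) by simp
  qed
  moreover have "j < q*M"
  proof (rule ccontr)
    assume "\<not> j < q*M"
    then have jq: "j \<ge> q*M" by simp
    have Mp: "M \<ge> 1" by (rule Mpos)
    show False
    proof (cases "j = 0")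
      case True then show False using jq q(1) Mp by (metis mult_eq_0_iff not_one_le_zero le_zero_eq)
    next
      case False
      then have lt: "Sj j u < m" using j(4) k0(1) by linarith
      have "j div M \<ge> q*M div M" using jq by (rule div_le_mono)
      then have "j div M \<ge> q" using Mp by simp
      then have "Sj j u \<ge> q*M + q" using Sj_lower[OF u, of j] jq by linarith
      then show False using lt q(2) by (simp add: algebra_simps)
    qed
  qed
  ultimately show "\<exists>k<q*M. dist ((f^^k) u) ((f^^k) v) > \<delta>'" by blast
qed

lemma entry_F:
  assumes E: "finite E" "E \<noteq> {}" "separated_set X T m \<epsilon> E"
    and d1: "\<forall>i\<le>N. \<forall>a\<in>X. \<forall>b\<in>X. dist a b \<le> \<delta>1 \<longrightarrow> dist ((S^^i) a) ((S^^i) b) \<le> \<epsilon>"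
    and \<delta>: "\<delta> \<le> \<delta>1" "\<delta> \<le> \<epsilon>"
  shows "\<exists>F. finite F \<and> F \<noteq> {} \<and> F \<subseteq> U \<and> separated_set X T m \<delta> F \<and> card E \<le> (N+1) * card F"
proof -
  have EX: "E \<subseteq> X" using E(3) unfolding separated_set_def by blast
  define e where "e x = (LEAST j. (T^^j) x \<in> U)" for x
  have e: "e x \<le> N \<and> (T^^e x) x \<in> U" if "x \<in> X" for x
  proof -
    from bspec[OF ret that] obtain j where j: "1 \<le> j" "j \<le> N" "(T^^j) x \<in> U" by blast
    have ex: "\<exists>n. (T^^n) x \<in> U" using j(3) by blast
    have A: "(T^^e x) x \<in> U" unfolding e_def by (rule LeastI_ex[OF ex])
    have B: "e x \<le> j" unfolding e_def by (intro Least_le) (rule j(3))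
    show ?thesis using A B j(2) by simp
  qed
  define Ec where "Ec c = {x\<in>E. e x = c}" for c
  have Eun: "E = (\<Union>c\<in>{..N}. Ec c)"
  proof
    show "E \<subseteq> (\<Union>c\<in>{..N}. Ec c)"
    proof
      fix x assume x: "x \<in> E"
      then have "e x \<le> N" using e EX by blast
      moreover have "x \<in> Ec (e x)" using x by (simp add: Ec_def)
      ultimately show "x \<in> (\<Union>c\<in>{..N}. Ec c)" by blast
    qed
    show "(\<Union>c\<in>{..N}. Ec c) \<subseteq> E" by (auto simp: Ec_def)
  qed
  have finEc: "finite (Ec c)" for c using E(1) by (simp add: Ec_def)
  define mx where "mx = Max ((\<lambda>c. card (Ec c)) ` {..N})"
  have "mx \<in> (\<lambda>c. card (Ec c)) ` {..N}" unfolding mx_def by (intro Max_in) auto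
  then obtain c where c: "c \<le> N" "card (Ec c) = mx" by auto
  have mxge: "card (Ec c') \<le> mx" if "c' \<le> N" for c' unfolding mx_def using that by (intro Max_ge) auto
  have "card E \<le> (\<Sum>c'\<in>{..N}. card (Ec c'))" using Eun card_UN_le[of "{..N}" Ec] by simp
  also have "\<dots> \<le> card {..N} * mx" using sum_bounded_above[of "{..N}" "\<lambda>c'. card (Ec c')" mx] mxge by simp
  finally have cardE: "card E \<le> (N+1) * card (Ec c)" using c by simp
  define F where "F = (T^^c) ` Ec c"
  have EcX: "Ec c \<subseteq> X" using EX by (auto simp: Ec_def)
  have cardF: "card F = card (Ec c)" unfolding F_def using Tn_inj EcX by (meson card_image inj_on_subset)
  have FU: "F \<subseteq> U" unfolding F_def using e EX by (auto simp: Ec_def)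
  have "card E > 0" using E(1,2) by (simp add: card_gt_0_iff)
  then have "card F > 0" using cardE cardF by (cases "card F = 0") auto
  then have Fne: "F \<noteq> {}" and finF: "finite F" using card_gt_0_iff by blast+
  have "separated_set X T m \<delta> F"
    unfolding separated_set_def
  proof (intro conjI ballI impI)
    show "F \<subseteq> X" using FU UX by blast
    fix a b assume ab: "a \<in> F" "b \<in> F" "a \<noteq> b"
    then obtain x y where xy: "x \<in> Ec c" "y \<in> Ec c" "a = (T^^c) x" "b = (T^^c) y" "x \<noteq> y"
      unfolding F_def by auto
    have xyX: "x \<in> X" "y \<in> X" using xy EcX by auto
    have abX: "a \<in> X" "b \<in> X" using xy xyX Tn_in by auto
    obtain k where k: "k < m" "dist ((T^^k) x) ((T^^k) y) > \<epsilon>"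
      using E(3) xy(1,2,5) unfolding separated_set_def Ec_def by blast
    show "\<exists>k<m. dist ((T^^k) a) ((T^^k) b) > \<delta>"
    proof (cases "c \<le> k")
      case True
      then have "(T^^(k-c)) a = (T^^k) x" "(T^^(k-c)) b = (T^^k) y" using xy Tcomp by auto
      then show ?thesis using k \<delta> by (intro exI[of _ "k-c"]) auto
    next
      case False
      then have bk: "(T^^k) x = (S^^(c-k)) a" "(T^^k) y = (S^^(c-k)) b"
        using T_back[of k c] xy xyX by auto
      have "dist a b > \<delta>1"
      proof (rule ccontr)
        assume "\<not> dist a b > \<delta>1"
        then have "dist ((S^^(c-k)) a) ((S^^(c-k)) b) \<le> \<epsilon>" using d1 abX c(1) by simp
        then show False using bk k by simp
      qed
      then show ?thesis using k \<delta> by (intro exI[of _ 0]) auto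
    qed
  qed
  then show ?thesis using finF Fne FU cardE cardF by auto
qed

end

theorem mainTheorem7:
  fixes X :: "'a::metric_space set" and T :: "'a \<Rightarrow> 'a"
  assumes "minimal_cantor_system X T"
    and "self_induced X T"
  shows "top_entropy X T = 0 \<or> top_entropy X T = \<infinity>"
proof -
  have cs: "cantor_set X" and homex: "\<exists>S. homeomorphism X X T S"
    and dense: "\<forall>x\<in>X. closure (orbit X T x) = X"
    using assms(1) unfolding minimal_cantor_system_def by auto
  have cX: "compact X" and Xne: "X \<noteq> {}" using cs unfolding cantor_set_def by auto
  obtain S where hom: "homeomorphism X X T S" using homex by blast
  interpret sys X T S using cX hom by unfold_locales
  obtain U where U: "U \<noteq> {}" "U \<subset> X" "openin (top_of_set X) U" "closedin (top_of_set X) U"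
      "top_conjugate U (induced_map U T) X T"
    using assms(2) unfolding self_induced_def by blast
  obtain h g where hg: "homeomorphism U X h g" "\<forall>x\<in>U. h (induced_map U T x) = T (h x)"
    using U(5) unfolding top_conjugate_def by blast
  have UX: "U \<subseteq> X" using U(2) by blast
  obtain K1 where K1: "\<forall>x\<in>X. \<exists>j\<le>K1. (T^^j) x \<in> U" using hit[OF dense U(3,1)] by blast
  have ret: "\<forall>x\<in>X. \<exists>j. 1 \<le> j \<and> j \<le> K1+1 \<and> (T^^j) x \<in> U"
  proof
    fix x assume x: "x \<in> X"
    then obtain j where "j \<le> K1" "(T^^j) (T x) \<in> U" using K1 T_in by blast
    then show "\<exists>j. 1 \<le> j \<and> j \<le> K1+1 \<and> (T^^j) x \<in> U"
      by (intro exI[of _ "Suc j"]) (simp add: funpow_Suc_right del: funpow.simps)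
  qed
  have XUo: "openin (top_of_set X) (X - U)" using U(4) openin_diff[of "top_of_set X" X U] by simp
  have XUne: "X - U \<noteq> {}" using U(2) by blast
  obtain K2 where K2: "\<forall>x\<in>X. \<exists>j\<le>K2. (T^^j) x \<in> X - U" using hit[OF dense XUo XUne] by blast
  have win: "\<forall>x\<in>X. \<exists>j\<le>K2+1. (T^^j) x \<notin> U"
  proof
    fix x assume "x \<in> X"
    then obtain j where "j \<le> K2" "(T^^j) x \<in> X - U" using K2 by blast
    then show "\<exists>j\<le>K2+1. (T^^j) x \<notin> U" by (intro exI[of _ j]) simp
  qed
  have cU: "compact U" using closedin_compact[OF cX U(4)] .
  have "closedin (top_of_set X) (X - U)" using U(3) by (simp add: openin_closedin_eq)
  then have cXU: "compact (X - U)" using closedin_compact[OF cX] by blast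
  have cont: "continuous_on (U \<times> (X - U)) (\<lambda>p. dist (fst p) (snd p))" by (intro continuous_intros)
  have ne: "U \<times> (X - U) \<noteq> {}" using U(1) XUne by auto
  have "\<exists>p\<in>U \<times> (X - U). \<forall>y\<in>U \<times> (X - U). dist (fst p) (snd p) \<le> dist (fst y) (snd y)"
    using continuous_attains_inf[OF compact_Times[OF cU cXU] ne cont] .
  then obtain p where p: "p \<in> U \<times> (X - U)" "\<forall>y\<in>U \<times> (X - U). dist (fst p) (snd p) \<le> dist (fst y) (snd y)"
    by blast
  define d0 where "d0 = dist (fst p) (snd p)"
  have d0pos: "d0 > 0" using p(1) by (auto simp: d0_def mem_Times_iff)
  have d0prop: "\<forall>x\<in>X. \<forall>y\<in>X. dist x y < d0 \<longrightarrow> (x \<in> U \<longleftrightarrow> y \<in> U)"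
  proof (intro ballI impI)
    fix x y assume xy: "x \<in> X" "y \<in> X" "dist x y < d0"
    show "x \<in> U \<longleftrightarrow> y \<in> U"
    proof (rule ccontr)
      assume "\<not> (x \<in> U \<longleftrightarrow> y \<in> U)"
      then have "(x,y) \<in> U \<times> (X - U) \<or> (y,x) \<in> U \<times> (X - U)" using xy by auto
      then have "d0 \<le> dist x y" using p(2) unfolding d0_def by (metis dist_commute fst_conv snd_conv)
      then show False using xy by simp
    qed
  qed
  interpret ind X T S U "K1+1" "K2+1" d0
    by unfold_locales (rule UX ret win d0pos d0prop | simp)+
  define sv where "sv Y \<phi> \<epsilon> n = (SUP E\<in>{E. finite E \<and> E \<noteq> {} \<and> separated_set Y \<phi> n \<epsilon> E}. ereal (ln (real (card E)) / real n))"
    for Y :: "'a set" and \<phi> \<epsilon> n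
  have H_def: "top_entropy Y \<phi> = (SUP \<epsilon>\<in>{0<..}. limsup (sv Y \<phi> \<epsilon>))" for Y \<phi>
    unfolding top_entropy_def by (intro SUP_cong refl arg_cong[where f=limsup] ext) (simp add: sv_def)
  have fU: "f ` U \<subseteq> U" using f_in UX by blast
  have HU: "top_entropy U f \<le> top_entropy X T" using entropy_conj_le[OF hg(1) cX hg(2) fU] .
  have Hnn: "top_entropy X T \<ge> 0"
  proof -
    obtain x0 where x0: "x0 \<in> X" using Xne by blast
    have "sv X T 1 n \<ge> 0" for n
    proof -
      have "{x0} \<in> {E. finite E \<and> E \<noteq> {} \<and> separated_set X T n 1 E}"
        using x0 by (simp add: separated_set_def)
      then have "ereal (ln (real (card {x0})) / real n) \<le> sv X T 1 n"
        unfolding sv_def by (rule SUP_upper)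
      then show ?thesis by (simp add: zero_ereal_def)
    qed
    then have "limsup (\<lambda>_. 0::ereal) \<le> limsup (sv X T 1)" by (intro Limsup_mono) simp
    then have "0 \<le> limsup (sv X T 1)" using Limsup_const[of sequentially "0::ereal"] by simp
    also have "\<dots> \<le> top_entropy X T" unfolding H_def by (rule SUP_upper) simp
    finally show ?thesis .
  qed
  show ?thesis
  proof (rule ccontr)
    assume neg: "\<not> ?thesis"
    then obtain Hr where Hr: "top_entropy X T = ereal Hr" "Hr > 0" using Hnn
      by (cases "top_entropy X T") auto
    define Mr where "Mr = real (K2+1)"
    have Mr1: "Mr \<ge> 1" by (simp add: Mr_def)
    define \<eta> where "\<eta> = Hr / (2 * Mr)"
    have \<eta>pos: "\<eta> > 0" using Hr Mr1 by (simp add: \<eta>_def)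
    define c0 where "c0 = (Hr + \<eta>) * (Mr / (Mr + 1))"
    have c0lt: "c0 < Hr"
    proof -
      have e1: "\<eta> * Mr = Hr / 2" using Mr1 by (simp add: \<eta>_def)
      have e2: "(Hr + \<eta>) * Mr < Hr * (Mr + 1)" using e1 Hr by (simp add: algebra_simps)
      have "c0 = (Hr + \<eta>) * Mr / (Mr + 1)" by (simp add: c0_def)
      also have "\<dots> < Hr" using e2 Mr1 by (simp add: pos_divide_less_eq)
      finally show ?thesis .
    qed
    have bound: "limsup (sv X T \<epsilon>) \<le> ereal c0" if epos: "\<epsilon> > 0" for \<epsilon>
    proof -
      define \<epsilon>0 where "\<epsilon>0 = min \<epsilon> (d0/2)"
      have e0: "\<epsilon>0 > 0" "\<epsilon>0 \<le> \<epsilon>" "\<epsilon>0 < d0" using epos d0pos by (auto simp: \<epsilon>0_def)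
      obtain \<delta>1 where \<delta>1: "\<delta>1 > 0" "\<forall>i\<le>K1+1. \<forall>a\<in>X. \<forall>b\<in>X. dist a b \<le> \<delta>1 \<longrightarrow> dist ((S^^i) a) ((S^^i) b) \<le> \<epsilon>0"
        using unif_iter[OF cX contS SX e0(1)] by blast
      define \<delta> where "\<delta> = min \<delta>1 \<epsilon>0"
      have \<delta>: "\<delta> > 0" "\<delta> \<le> \<delta>1" "\<delta> \<le> \<epsilon>0" "\<delta> < d0" using \<delta>1 e0 by (auto simp: \<delta>_def)
      obtain \<delta>' where \<delta>': "\<delta>' > 0" "\<forall>i\<le>K1+1. \<forall>a\<in>X. \<forall>b\<in>X. dist a b \<le> \<delta>' \<longrightarrow> dist ((T^^i) a) ((T^^i) b) \<le> \<delta>"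
        using unif_iter[OF cX contT TX \<delta>(1)] by blast
      have "limsup (sv U f \<delta>') \<le> top_entropy U f" unfolding H_def[of U f] by (rule SUP_upper) (simp add: \<delta>'(1))
      also have "\<dots> \<le> ereal Hr" using HU Hr by simp
      also have "\<dots> < ereal (Hr + \<eta>)" using \<eta>pos by simp
      finally have "eventually (\<lambda>n. sv U f \<delta>' n < ereal (Hr + \<eta>)) sequentially" by (rule Limsup_lessD)
      then obtain n0 where n0: "\<And>n. n \<ge> n0 \<Longrightarrow> sv U f \<delta>' n < ereal (Hr + \<eta>)"
        by (auto simp: eventually_sequentially)
      define Dr where "Dr = real (K2+2)"
      have Dr: "Dr = Mr + 1" by (simp add: Dr_def Mr_def)
      define cs where "cs m = ln (real (K1+2)) / real m + (Hr + \<eta>) * (Mr / Dr + Mr / real m)" for m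
      have pt: "sv X T \<epsilon> m \<le> ereal (cs m)" if m: "m \<ge> max 1 (n0 * (K2+2))" for m
      proof -
        have "sv X T \<epsilon> m \<le> sv X T \<epsilon>0 m" unfolding sv_def
        proof (rule SUP_subset_mono)
          show "{E. finite E \<and> E \<noteq> {} \<and> separated_set X T m \<epsilon> E} \<subseteq> {E. finite E \<and> E \<noteq> {} \<and> separated_set X T m \<epsilon>0 E}"
            using e0(2) unfolding separated_set_def by fastforce
        qed simp
        also have "sv X T \<epsilon>0 m \<le> ereal (cs m)" unfolding sv_def
        proof (rule SUP_least)
          fix E assume E: "E \<in> {E. finite E \<and> E \<noteq> {} \<and> separated_set X T m \<epsilon>0 E}"
          obtain F where F: "finite F" "F \<noteq> {}" "F \<subseteq> U" "separated_set X T m \<delta> F" "card E \<le> (K1+1+1) * card F"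
            using entry_F[of E m \<epsilon>0 \<delta>1 \<delta>] E \<delta>1(2) \<delta>(2,3) by blast
          define q where "q = m div (K2+2) + 1"
          have q1: "q \<ge> 1" by (simp add: q_def)
          have r: "m mod (K2+2) < K2+2" by simp
          have d: "m div (K2+2) * (K2+2) + m mod (K2+2) = m" by (rule div_mult_mod_eq)
          have ee: "(m div (K2+2) + 1) * (K2+2) = m div (K2+2) * (K2+2) + (K2+2)" by (simp only: distrib_right mult_1)
          have "m < (m div (K2+2) + 1) * (K2+2)" using r d ee by linarith
          then have mq: "m \<le> q * (K2+1+1)" by (simp add: q_def)
          have Fsep: "separated_set U f (q*(K2+1)) \<delta>' F"
            using sep_transfer[OF F(3) F(4) \<delta>(4) \<delta>'(2) q1 mq] .
          have "m div (K2+2) \<ge> n0" using m less_eq_div_iff_mult_less_eq[of "K2+2" n0 m] by simp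
          then have qn0: "q \<ge> n0" by (simp add: q_def)
          have "q \<le> q*(K2+1)" by simp
          then have qn: "q*(K2+1) \<ge> n0" using qn0 by linarith
          have qpos: "q*(K2+1) > 0" using q1 by simp
          have "ereal (ln (real (card F)) / real (q*(K2+1))) \<le> sv U f \<delta>' (q*(K2+1))"
            unfolding sv_def by (rule SUP_upper) (use F Fsep in auto)
          also have "\<dots> < ereal (Hr + \<eta>)" using n0 qn by blast
          finally have lt: "ln (real (card F)) / real (q*(K2+1)) < Hr + \<eta>" by simp
          have qr: "real (q*(K2+1)) > 0" using qpos by (simp only: of_nat_0_less_iff)
          have lnF: "ln (real (card F)) < (Hr + \<eta>) * real (q*(K2+1))"
            using lt pos_divide_less_eq[OF qr, of "ln (real (card F))" "Hr + \<eta>"] by (simp only: mult.commute)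
          have cF: "card F \<ge> 1" using F(1,2) by (simp add: Suc_le_eq card_gt_0_iff)
          have cE: "card E \<ge> 1" using E by (simp add: Suc_le_eq card_gt_0_iff)
          have rle: "real (card E) \<le> real ((K1+1+1) * card F)" using F(5) by (simp only: of_nat_le_iff)
          have pos: "real (card E) > 0" using cE by simp
          have pos2: "real ((K1+1+1) * card F) > 0" using rle pos by linarith
          have "ln (real (card E)) \<le> ln (real ((K1+1+1) * card F))"
            using ln_le_cancel_iff[OF pos pos2] rle by blast
          also have "\<dots> = ln (real (K1+2)) + ln (real (card F))"
          proof -
            have "real ((K1+1+1) * card F) = real (K1+2) * real (card F)" by (simp add: algebra_simps)
            moreover have "real (K1+2) > 0" "real (card F) > 0" using cF by auto
            ultimately show ?thesis using ln_mult by simp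
          qed
          finally have lnE: "ln (real (card E)) \<le> ln (real (K1+2)) + (Hr + \<eta>) * real (q*(K2+1))"
            using lnF by simp
          have mpos: "real m > 0" using m by simp
          have qle: "real q \<le> real m / Dr + 1"
            using of_nat_div_le_of_nat[of m "K2+2"] by (simp add: q_def Dr_def)
          have A: "Hr + \<eta> > 0" using Hr \<eta>pos by simp
          have "(Hr + \<eta>) * real (q*(K2+1)) = (Hr + \<eta>) * Mr * real q" by (simp add: Mr_def algebra_simps)
          also have "\<dots> \<le> (Hr + \<eta>) * Mr * (real m / Dr + 1)"
            using qle A Mr1 by (intro mult_left_mono) auto
          finally have B: "(Hr + \<eta>) * real (q*(K2+1)) \<le> (Hr + \<eta>) * Mr * (real m / Dr + 1)" .
          have "ln (real (card E)) / real m \<le> (ln (real (K1+2)) + (Hr + \<eta>) * Mr * (real m / Dr + 1)) / real m"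
            using lnE B mpos by (intro divide_right_mono) auto
          also have "\<dots> = cs m"
          proof -
            have Dp: "Dr > 0" using Dr Mr1 by simp
            have s1: "(Hr + \<eta>) * Mr * (real m / Dr + 1) / real m = (Hr + \<eta>) * (Mr / Dr + Mr / real m)"
              using mpos Dp by (simp add: field_simps)
            have "(ln (real (K1+2)) + (Hr + \<eta>) * Mr * (real m / Dr + 1)) / real m
                = ln (real (K1+2)) / real m + (Hr + \<eta>) * Mr * (real m / Dr + 1) / real m"
              by (rule add_divide_distrib)
            also have "\<dots> = ln (real (K1+2)) / real m + (Hr + \<eta>) * (Mr / Dr + Mr / real m)"
              unfolding s1 ..
            finally show ?thesis unfolding cs_def .
          qed
          finally show "ereal (ln (real (card E)) / real m) \<le> ereal (cs m)" by simp
        qed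
        finally show ?thesis .
      qed
      have "(\<lambda>m. ln (real (K1+2)) / real m + (Hr + \<eta>) * (Mr / Dr + Mr / real m))
              \<longlonglongrightarrow> 0 + (Hr + \<eta>) * (Mr / Dr + 0)"
        by (intro tendsto_intros)
      then have "cs \<longlonglongrightarrow> c0" unfolding cs_def c0_def Dr by simp
      then have "(\<lambda>m. ereal (cs m)) \<longlonglongrightarrow> ereal c0" by (rule tendsto_ereal)
      then have lim: "limsup (\<lambda>m. ereal (cs m)) = ereal c0" by (intro lim_imp_Limsup) simp_all
      have "limsup (sv X T \<epsilon>) \<le> limsup (\<lambda>m. ereal (cs m))"
        unfolding eventually_sequentially
        by (rule Limsup_mono, unfold eventually_sequentially) (rule exI[of _ "max 1 (n0 * (K2+2))"], use pt in blast)
      then show ?thesis using lim by simp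
    qed
    have "top_entropy X T \<le> ereal c0" unfolding H_def by (rule SUP_least) (use bound in auto)
    then show False using Hr c0lt by simp
  qed
qed

end
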